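(* Let $k$ be a field, $J,K$ proper monomial ideals in $Q=k[x,y,z]$, and $I=JK$. Then $[I:x]\cdot[I:y]\subseteq z\,[I:(x,y)]+I$.
   Context: For ideals $I,L$ of $Q$, $I:L=\{f\in Q: fL\subseteq I\}$ and $I:f=I:(f)$. *)

theory Defs
  imports "HOL-Computational_Algebra.Polynomial"
begin

text \<open>The ring Q = k[x,y,z] is represented as nested univariate polynomials
  'a poly poly poly: innermost variable x, middle variable y, outermost z.\<close>

definition varX :: "'a::comm_ring_1 poly poly poly" where
  "varX = [:[:[:0, 1:]:]:]"
definition varY :: "'a::comm_ring_1 poly poly poly" where
  "varY = [:[:0, 1:]:]"
definition varZ :: "'a::comm_ring_1 poly poly poly" where
  "varZ = [:0, 1:]"

definition mono3 :: "nat \<Rightarrow> nat \<Rightarrow> nat \<Rightarrow> 'a::comm_ring_1 poly poly poly" where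
  "mono3 a b c = varX ^ a * varY ^ b * varZ ^ c"

definition is_ideal :: "'a::comm_ring_1 set \<Rightarrow> bool" where
  "is_ideal I \<longleftrightarrow> 0 \<in> I \<and> (\<forall>a\<in>I. \<forall>b\<in>I. a + b \<in> I) \<and> (\<forall>a\<in>I. \<forall>r. r * a \<in> I)"

definition ideal_gen :: "'a::comm_ring_1 set \<Rightarrow> 'a set" where
  "ideal_gen S = \<Inter>{I. is_ideal I \<and> S \<subseteq> I}"

definition ideal_prod :: "'a::comm_ring_1 set \<Rightarrow> 'a set \<Rightarrow> 'a set" where
  "ideal_prod I J = ideal_gen {a * b | a b. a \<in> I \<and> b \<in> J}"

definition colon :: "'a::comm_ring_1 set \<Rightarrow> 'a set \<Rightarrow> 'a set" where
  "colon I L = {f. \<forall>l\<in>L. f * l \<in> I}"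

definition monomial_ideal :: "'a::comm_ring_1 poly poly poly set \<Rightarrow> bool" where
  "monomial_ideal I \<longleftrightarrow> (\<exists>S. S \<subseteq> {mono3 a b c | a b c. True} \<and> I = ideal_gen S)"

end

theory Submission
  imports Defs
begin


definition coeff3 :: "'a::comm_ring_1 poly poly poly \<Rightarrow> nat \<Rightarrow> nat \<Rightarrow> nat \<Rightarrow> 'a" where
  "coeff3 f i j k = coeff (coeff (coeff f k) j) i"

definition term3 :: "'a::comm_ring_1 \<Rightarrow> nat \<Rightarrow> nat \<Rightarrow> nat \<Rightarrow> 'a poly poly poly" where
  "term3 c i j k = monom (monom (monom c i) j) k"

lemma mono3_term3: "mono3 a b c = term3 1 a b c"
proof -
  have x: "[:0,1:] = monom (1::'b::comm_ring_1) 1" by (simp add: monom_Suc monom_0)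
  have y: "\<And>p::'b::comm_ring_1. [:p:] = monom p 0" by (simp add: monom_0)
  show ?thesis
  unfolding mono3_def varX_def varY_def varZ_def term3_def x
  unfolding y
  by (simp only: monom_power mult_monom mult_1 mult_0 add_0 mult.commute mult_1_right power_one add_0_right)
qed

lemma coeff3_term_mult:
  "coeff3 (term3 c i j k * g) p q r =
    (if i \<le> p \<and> j \<le> q \<and> k \<le> r then c * coeff3 g (p-i) (q-j) (r-k) else 0)"
  unfolding coeff3_def term3_def by (simp add: coeff_monom_mult)

lemma coeff3_add: "coeff3 (f+g) i j k = coeff3 f i j k + coeff3 g i j k"
  unfolding coeff3_def by simp

lemma coeff3_0: "coeff3 0 i j k = 0"
  unfolding coeff3_def by simp

lemma coeff3_1: "coeff3 1 i j k = (if i=0 \<and> j=0 \<and> k=0 then 1 else 0)"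
  unfolding coeff3_def by (simp add: coeff_1)

lemma decomp3:
  "f = (\<Sum>k\<le>degree f. \<Sum>j\<le>degree (coeff f k). \<Sum>i\<le>degree (coeff (coeff f k) j).
          term3 (coeff3 f i j k) i j k)"
proof -
  have "f = (\<Sum>k\<le>degree f. monom (coeff f k) k)" by (simp add: poly_as_sum_of_monoms)
  also have "\<dots> = (\<Sum>k\<le>degree f. monom (\<Sum>j\<le>degree (coeff f k). monom (coeff (coeff f k) j) j) k)"
    by (simp add: poly_as_sum_of_monoms)
  also have "\<dots> = (\<Sum>k\<le>degree f. monom (\<Sum>j\<le>degree (coeff f k). monom (\<Sum>i\<le>degree (coeff (coeff f k) j). monom (coeff (coeff (coeff f k) j) i) i) j) k)"
    by (simp add: poly_as_sum_of_monoms)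
  finally show ?thesis by (simp add: monom_sum term3_def coeff3_def)
qed


lemma vec:
  fixes u1 u2 u3 v1 v2 v3 a1 a2 a3 b1 b2 b3 c1 c2 c3 d1 d2 d3 :: nat
  assumes up: "\<And>p1 p2 p3 q1 q2 q3. M p1 p2 p3 \<Longrightarrow> p1\<le>q1 \<Longrightarrow> p2\<le>q2 \<Longrightarrow> p3\<le>q3 \<Longrightarrow> M q1 q2 q3"
   and AB: "M (a1+b1) (a2+b2) (a3+b3)" and AD: "M (a1+d1) (a2+d2) (a3+d3)"
   and CB: "M (c1+b1) (c2+b2) (c3+b3)" and CD: "M (c1+d1) (c2+d2) (c3+d3)"
   and h: "a1+b1 \<le> u1+1" "a2+b2 \<le> u2" "a3+b3\<le>u3"
   "c1+d1 \<le> v1" "c2+d2 \<le> v2+1" "c3+d3\<le>v3"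
   "a1+a2+a3>0" "b1+b2+b3>0" "c1+c2+c3>0" "d1+d2+d3>0"
  shows "M (u1+v1) (u2+v2) (u3+v3) \<or>
    (\<exists>w. u3+v3 = Suc w \<and> M (u1+v1+1) (u2+v2) w \<and> M (u1+v1) (u2+v2+1) w)"
proof -
  have alt2: ?thesis if t: "c3 + d3 \<ge> 1" "a3 + b3 \<ge> 1" "a1+b1 \<le> u1+v1+1" "c2+d2 \<le> u2+v2+1"
  proof -
    obtain w where w: "u3+v3 = Suc w" using t h by (metis add_is_0 less_one not_less not0_implies_Suc le_0_eq)
    have "M (u1+v1+1) (u2+v2) w" by (rule up[OF AB]) (use h t w in linarith)+
    moreover have "M (u1+v1) (u2+v2+1) w" by (rule up[OF CD]) (use h t w in linarith)+
    ultimately show ?thesis using w by auto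
  qed
  show ?thesis
  proof (cases "c1+d1 \<ge> 1")
    case True
    have "M (u1+v1) (u2+v2) (u3+v3)" by (rule up[OF AB]) (use h True in linarith)+
    then show ?thesis by simp
  next
    case c1: False
    show ?thesis
    proof (cases "a2+b2 \<ge> 1")
      case True
      have "M (u1+v1) (u2+v2) (u3+v3)" by (rule up[OF CD]) (use h True in linarith)+
      then show ?thesis by simp
    next
      case c2: False
      show ?thesis
      proof (cases "b1 \<ge> 1 \<and> c2 \<ge> 1")
        case True
        have "M (u1+v1) (u2+v2) (u3+v3)" by (rule up[OF AD]) (use h True c1 c2 in linarith)+
        then show ?thesis by simp
      next
        case c3: False
        show ?thesis
        proof (cases "a1 \<ge> 1 \<and> d2 \<ge> 1")
          case True
          have "M (u1+v1) (u2+v2) (u3+v3)" by (rule up[OF CB]) (use h True c1 c2 in linarith)+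
          then show ?thesis by simp
        next
          case c4: False
          show ?thesis
          proof (cases "a1 = 0 \<and> b1 = 0")
            case True
            have "M (u1+v1) (u2+v2) (u3+v3)" by (rule up[OF AB]) (use h True c1 c2 in linarith)+
            then show ?thesis by simp
          next
            case c5: False
            show ?thesis
            proof (cases "c2 = 0 \<and> d2 = 0")
              case True
              have "M (u1+v1) (u2+v2) (u3+v3)" by (rule up[OF CD]) (use h True c1 c2 in linarith)+
              then show ?thesis by simp
            next
              case c6: False
              show ?thesis
              proof (cases "b1 = 0")
                case True
                then have "d2 = 0" "a1 \<ge> 1" "c2 \<ge> 1" using c3 c4 c5 c6 by auto
                then show ?thesis using alt2 h True c1 c2 by simp
              next
                case False
                then have "c2 = 0" "a1 = 0" "d2 \<ge> 1" using c3 c4 c5 c6 by auto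
                then show ?thesis using alt2 h False c1 c2 by simp
              qed
            qed
          qed
        qed
      qed
    qed
  qed
qed


lemma ideal_gen_ideal: "is_ideal (ideal_gen S)"
  unfolding ideal_gen_def is_ideal_def by auto

lemma ideal_gen_sub: "S \<subseteq> ideal_gen S"
  unfolding ideal_gen_def by auto

lemma ideal_gen_least: "is_ideal T \<Longrightarrow> S \<subseteq> T \<Longrightarrow> ideal_gen S \<subseteq> T"
  unfolding ideal_gen_def by auto

lemma ideal_multR: "is_ideal T \<Longrightarrow> a \<in> T \<Longrightarrow> a * r \<in> T"
  unfolding is_ideal_def by (metis mult.commute)

lemma sum_closed:
  assumes "0 \<in> T" "\<forall>a\<in>T. \<forall>b\<in>T. a + b \<in> T" "\<And>x. x \<in> A \<Longrightarrow> h x \<in> T"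
  shows "sum h A \<in> T"
proof (cases "finite A")
  case True
  then show ?thesis using assms(3)
    by (induction A rule: finite_induct) (use assms(1,2) in auto)
qed (use assms in auto)

lemma term3_0[simp]: "term3 0 i j k = 0"
  unfolding term3_def by simp

lemma term3_mult: "term3 c i j k * term3 d i' j' k' = term3 (c*d) (i+i') (j+j') (k+k')"
  unfolding term3_def by (simp add: mult_monom)

lemma terms_mult:
  assumes "0 \<in> T" "\<forall>a\<in>T. \<forall>b\<in>T. a + b \<in> T"
    and "\<And>i j k. coeff3 f i j k \<noteq> 0 \<Longrightarrow> term3 (coeff3 f i j k) i j k * g \<in> T"
  shows "f * g \<in> T"
proof -
  define F where "F = (\<Sum>k\<le>degree f. \<Sum>j\<le>degree (coeff f k). \<Sum>i\<le>degree (coeff (coeff f k) j).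
          term3 (coeff3 f i j k) i j k)"
  have "f = F" unfolding F_def by (rule decomp3)
  then have "f * g = F * g" by simp
  also have "\<dots> = (\<Sum>k\<le>degree f. \<Sum>j\<le>degree (coeff f k). \<Sum>i\<le>degree (coeff (coeff f k) j).
          term3 (coeff3 f i j k) i j k * g)" unfolding F_def by (simp add: sum_distrib_right)
  also have "\<dots> \<in> T"
    apply (rule sum_closed[OF assms(1,2)])+
    using assms(1,3) by (metis mult_zero_left term3_0)
  finally show ?thesis .
qed

definition Gen :: "'a::comm_ring_1 poly poly poly set \<Rightarrow> 'a poly poly poly set" where
  "Gen S = {f. \<forall>i j k. coeff3 f i j k \<noteq> 0 \<longrightarrow> (\<exists>a b c. mono3 a b c \<in> S \<and> a \<le> i \<and> b \<le> j \<and> c \<le> k)}"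

lemma coeff3_mono3: "coeff3 (mono3 a b c :: 'a::comm_ring_1 poly poly poly) i j k = (if i = a \<and> j = b \<and> k = c then 1 else 0)"
  using coeff3_term_mult[of 1 a b c 1 i j k] by (auto simp: mono3_term3 coeff3_1)

lemma Gen_ideal: "is_ideal (Gen S)"
proof -
  have z: "0 \<in> Gen S" by (simp add: Gen_def coeff3_0)
  have a: "\<forall>a\<in>Gen S. \<forall>b\<in>Gen S. a + b \<in> Gen S"
  proof (intro ballI)
    fix a b assume ab: "a \<in> Gen S" "b \<in> Gen S"
    show "a + b \<in> Gen S" unfolding Gen_def
    proof (intro CollectI allI impI)
      fix i j k assume "coeff3 (a + b) i j k \<noteq> 0"
      then have "coeff3 a i j k \<noteq> 0 \<or> coeff3 b i j k \<noteq> 0" by (auto simp: coeff3_add)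
      then show "\<exists>a b c. mono3 a b c \<in> S \<and> a \<le> i \<and> b \<le> j \<and> c \<le> k"
        using ab unfolding Gen_def by blast
    qed
  qed
  have "r * a \<in> Gen S" if ain: "a \<in> Gen S" for r a
  proof (rule terms_mult[OF z a])
    fix i j k
    show "term3 (coeff3 r i j k) i j k * a \<in> Gen S" unfolding Gen_def
    proof (intro CollectI allI impI)
      fix p q s assume nz: "coeff3 (term3 (coeff3 r i j k) i j k * a) p q s \<noteq> 0"
      then have le: "i \<le> p" "j \<le> q" "k \<le> s" and "coeff3 a (p-i) (q-j) (s-k) \<noteq> 0"
        by (auto simp: coeff3_term_mult split: if_splits)
      then obtain a' b' c' where "mono3 a' b' c' \<in> S" "a' \<le> p-i" "b' \<le> q-j" "c' \<le> s-k"
        using ain unfolding Gen_def by blast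
      then show "\<exists>a b c. mono3 a b c \<in> S \<and> a \<le> p \<and> b \<le> q \<and> c \<le> s"
        by (intro exI[of _ a'] exI[of _ b'] exI[of _ c']) auto
    qed
  qed
  then show ?thesis using z a unfolding is_ideal_def by blast
qed

lemma mono3_mult: "mono3 a b c * mono3 a' b' c' = mono3 (a+a') (b+b') (c+c')"
  by (simp add: mono3_term3 term3_mult)

lemma gen_eq:
  assumes S: "S \<subseteq> {mono3 a b c | a b c. True}"
  shows "ideal_gen S = Gen S"
proof
  show "ideal_gen S \<subseteq> Gen S"
  proof (rule ideal_gen_least[OF Gen_ideal])
    show "S \<subseteq> Gen S"
    proof
      fix s assume "s \<in> S"
      with S obtain a b c where s: "s = mono3 a b c" by auto
      show "s \<in> Gen S" unfolding Gen_def using \<open>s \<in> S\<close> s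
        by (auto simp: coeff3_mono3 split: if_splits)
    qed
  qed
next
  show "Gen S \<subseteq> ideal_gen S"
  proof
    fix f assume f: "f \<in> Gen S"
    have I: "is_ideal (ideal_gen S)" by (rule ideal_gen_ideal)
    have "f * 1 \<in> ideal_gen S"
    proof (rule terms_mult)
      show "0 \<in> ideal_gen S" "\<forall>a\<in>ideal_gen S. \<forall>b\<in>ideal_gen S. a + b \<in> ideal_gen S"
        using I unfolding is_ideal_def by auto
      fix i j k assume nz: "coeff3 f i j k \<noteq> 0"
      then obtain a b c where m: "mono3 a b c \<in> S" "a \<le> i" "b \<le> j" "c \<le> k"
        using f unfolding Gen_def by blast
      have "term3 (coeff3 f i j k) i j k * 1 = term3 (coeff3 f i j k) (i-a) (j-b) (k-c) * mono3 a b c"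
        using m by (simp add: mono3_term3 term3_mult)
      also have "\<dots> \<in> ideal_gen S"
        using I m(1) ideal_gen_sub unfolding is_ideal_def by blast
      finally show "term3 (coeff3 f i j k) i j k * 1 \<in> ideal_gen S" .
    qed
    then show "f \<in> ideal_gen S" by simp
  qed
qed

lemma mono_in_gen:
  assumes S: "S \<subseteq> {mono3 a b c | a b c. True}"
  shows "(mono3 i j k :: 'a::field poly poly poly) \<in> ideal_gen S \<longleftrightarrow> (\<exists>a b c. mono3 a b c \<in> S \<and> a \<le> i \<and> b \<le> j \<and> c \<le> k)"
  using gen_eq[OF S] unfolding Gen_def by (auto simp: coeff3_mono3)

lemma mono3_inj:
  assumes "(mono3 a b c :: 'a::field poly poly poly) = mono3 a' b' c'"
  shows "a = a' \<and> b = b' \<and> c = c'"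
  using arg_cong[OF assms, of "\<lambda>f. coeff3 f a b c"] by (simp add: coeff3_mono3 split: if_splits)



lemma mono3_000: "mono3 0 0 0 = 1" by (simp add: mono3_def)
lemma varX_mono: "varX = mono3 1 0 0" by (simp add: mono3_def)
lemma varY_mono: "varY = mono3 0 1 0" by (simp add: mono3_def)
lemma varZ_mono: "varZ = mono3 0 0 1" by (simp add: mono3_def)

lemma ideal_0: "is_ideal T \<Longrightarrow> 0 \<in> T" unfolding is_ideal_def by auto
lemma ideal_add: "is_ideal T \<Longrightarrow> a \<in> T \<Longrightarrow> b \<in> T \<Longrightarrow> a + b \<in> T" unfolding is_ideal_def by auto
lemma ideal_mult: "is_ideal T \<Longrightarrow> a \<in> T \<Longrightarrow> r * a \<in> T" unfolding is_ideal_def by auto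

lemma colon_char:
  assumes I: "is_ideal I" and sub: "G \<subseteq> ideal_gen G" and gens: "\<And>l. l \<in> ideal_gen G \<Longrightarrow> \<forall>f. (\<forall>g\<in>G. f * g \<in> I) \<longrightarrow> f * l \<in> I"
  shows "colon I (ideal_gen G) = {f. \<forall>g\<in>G. f * g \<in> I}"
  unfolding colon_def using sub gens by blast

lemma colon_gen:
  assumes I: "is_ideal I"
  shows "colon I (ideal_gen G) = {f. \<forall>g\<in>G. f * g \<in> I}"
proof (rule colon_char[OF I ideal_gen_sub])
  fix l assume l: "l \<in> ideal_gen G"
  have "ideal_gen G \<subseteq> {l. \<forall>f. (\<forall>g\<in>G. f * g \<in> I) \<longrightarrow> f * l \<in> I}"
  proof (rule ideal_gen_least)
    show "is_ideal {l. \<forall>f. (\<forall>g\<in>G. f * g \<in> I) \<longrightarrow> f * l \<in> I}"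
      unfolding is_ideal_def
    proof (intro conjI ballI allI)
      show "0 \<in> {l. \<forall>f. (\<forall>g\<in>G. f * g \<in> I) \<longrightarrow> f * l \<in> I}" using ideal_0[OF I] by simp
    next
      fix a b assume "a \<in> {l. \<forall>f. (\<forall>g\<in>G. f * g \<in> I) \<longrightarrow> f * l \<in> I}"
         "b \<in> {l. \<forall>f. (\<forall>g\<in>G. f * g \<in> I) \<longrightarrow> f * l \<in> I}"
      then show "a + b \<in> {l. \<forall>f. (\<forall>g\<in>G. f * g \<in> I) \<longrightarrow> f * l \<in> I}"
        using ideal_add[OF I] by (simp add: distrib_left)
    next
      fix a r assume a: "a \<in> {l. \<forall>f. (\<forall>g\<in>G. f * g \<in> I) \<longrightarrow> f * l \<in> I}"
      show "r * a \<in> {l. \<forall>f. (\<forall>g\<in>G. f * g \<in> I) \<longrightarrow> f * l \<in> I}"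
      proof (intro CollectI allI impI)
        fix f assume "\<forall>g\<in>G. f * g \<in> I"
        then have "f * a \<in> I" using a by blast
        then have "r * (f * a) \<in> I" by (rule ideal_mult[OF I])
        then show "f * (r * a) \<in> I" by (simp add: mult.left_commute)
      qed
    qed
  qed blast
  then show "\<forall>f. (\<forall>g\<in>G. f * g \<in> I) \<longrightarrow> f * l \<in> I" using l by blast
qed

lemma ideal_left: "is_ideal T \<Longrightarrow> is_ideal {b. m * b \<in> T}"
  unfolding is_ideal_def by (auto simp: distrib_left mult.left_commute)

lemma ideal_left2: "is_ideal T \<Longrightarrow> is_ideal {a. \<forall>b\<in>K. a * b \<in> T}"
  unfolding is_ideal_def by (auto simp: distrib_right mult.assoc)



lemma prod_sub_gen:
  assumes "m \<in> SJ" "b \<in> SK"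
  shows "m * b \<in> ideal_gen {a * b | a b. a \<in> SJ \<and> b \<in> SK}"
proof -
  have "m * b \<in> {a * b | a b. a \<in> SJ \<and> b \<in> SK}" using assms by blast
  then show ?thesis using ideal_gen_sub by (rule subsetD[rotated])
qed

lemma prod_gen:
  assumes SJ: "J = ideal_gen SJ" and SK: "K = ideal_gen SK"
  shows "ideal_prod J K = ideal_gen {a * b | a b. a \<in> SJ \<and> b \<in> SK}"
proof
  define T where "T = ideal_gen {a * b | a b. a \<in> SJ \<and> b \<in> SK}"
  have T: "is_ideal T" unfolding T_def by (rule ideal_gen_ideal)
  have "SJ \<subseteq> {a. \<forall>b\<in>K. a * b \<in> T}"
  proof
    fix m assume m: "m \<in> SJ"
    have "ideal_gen SK \<subseteq> {b. m * b \<in> T}"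
    proof (rule ideal_gen_least[OF ideal_left[OF T]])
      show "SK \<subseteq> {b. m * b \<in> T}" using prod_sub_gen[OF m] unfolding T_def by blast
    qed
    then show "m \<in> {a. \<forall>b\<in>K. a * b \<in> T}" using SK by blast
  qed
  then have "ideal_gen SJ \<subseteq> {a. \<forall>b\<in>K. a * b \<in> T}"
    by (rule ideal_gen_least[OF ideal_left2[OF T]])
  then have "{a * b | a b. a \<in> J \<and> b \<in> K} \<subseteq> T" using SJ by blast
  then show "ideal_prod J K \<subseteq> T" unfolding ideal_prod_def
    by (rule ideal_gen_least[OF T])
next
  have "{a * b | a b. a \<in> SJ \<and> b \<in> SK} \<subseteq> ideal_prod J K"
  proof
    fix x assume "x \<in> {a * b | a b. a \<in> SJ \<and> b \<in> SK}"
    then obtain a b where ab: "x = a * b" "a \<in> SJ" "b \<in> SK" by blast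
    have "a \<in> J" "b \<in> K" using ab SJ SK ideal_gen_sub by blast+
    then have "x \<in> {a * b | a b. a \<in> J \<and> b \<in> K}" using ab by blast
    then show "x \<in> ideal_prod J K" unfolding ideal_prod_def by (rule subsetD[OF ideal_gen_sub])
  qed
  then show "ideal_gen {a * b | a b. a \<in> SJ \<and> b \<in> SK} \<subseteq> ideal_prod J K"
    unfolding ideal_prod_def by (rule ideal_gen_least[OF ideal_gen_ideal])
qed

lemma proper_gen:
  assumes "J = ideal_gen SJ" "J \<noteq> UNIV" "mono3 a b c \<in> SJ"
  shows "a + b + c > 0"
proof (rule ccontr)
  assume "\<not> a + b + c > 0"
  then have "a = 0" "b = 0" "c = 0" by auto
  then have "1 \<in> SJ" using assms(3) by (simp add: mono3_000)
  then have "1 \<in> J" using assms(1) ideal_gen_sub by blast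
  then have "\<forall>r. r * 1 \<in> J" using ideal_gen_ideal[of SJ] assms(1) unfolding is_ideal_def by blast
  then show False using assms(2) by auto
qed

theorem mainTheorem7:
  fixes J K :: "'a::field poly poly poly set"
  assumes "monomial_ideal J" and "monomial_ideal K"
    and "J \<noteq> UNIV" and "K \<noteq> UNIV"
  defines "I \<equiv> ideal_prod J K"
  shows "ideal_prod (colon I (ideal_gen {varX})) (colon I (ideal_gen {varY}))
         \<subseteq> {varZ * a + b | a b. a \<in> colon I (ideal_gen {varX, varY}) \<and> b \<in> I}"
proof -
  obtain SJ where SJ: "SJ \<subseteq> {mono3 a b c | a b c. True}" "J = ideal_gen SJ"
    using assms(1) unfolding monomial_ideal_def by blast
  obtain SK where SK: "SK \<subseteq> {mono3 a b c | a b c. True}" "K = ideal_gen SK"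
    using assms(2) unfolding monomial_ideal_def by blast
  define SI where "SI = {a * b | a b. a \<in> SJ \<and> b \<in> SK}"
  have Ieq: "I = ideal_gen SI" unfolding I_def SI_def by (rule prod_gen[OF SJ(2) SK(2)])
  have Iid: "is_ideal I" unfolding Ieq by (rule ideal_gen_ideal)
  have SI: "SI \<subseteq> {mono3 a b c | a b c. True}"
  proof
    fix m assume "m \<in> SI"
    then obtain x y where "m = x * y" "x \<in> SJ" "y \<in> SK" unfolding SI_def by blast
    then show "m \<in> {mono3 a b c | a b c. True}" using SJ(1) SK(1) mono3_mult by blast
  qed
  have SIsub: "SI \<subseteq> I" unfolding Ieq by (rule ideal_gen_sub)
  have up: "mono3 q1 q2 q3 \<in> I" if "mono3 p1 p2 p3 \<in> I" "p1 \<le> q1" "p2 \<le> q2" "p3 \<le> q3" for p1 p2 p3 q1 q2 q3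
  proof -
    have "mono3 (q1-p1) (q2-p2) (q3-p3) * mono3 p1 p2 p3 \<in> I" using ideal_mult[OF Iid that(1)] .
    then show ?thesis using that by (simp add: mono3_mult)
  qed
  have memI: "\<exists>a1 b1 c1 a2 b2 c2. mono3 a1 b1 c1 \<in> SJ \<and> mono3 a2 b2 c2 \<in> SK \<and>
      a1 + a2 \<le> p \<and> b1 + b2 \<le> q \<and> c1 + c2 \<le> r" if mI: "mono3 p q r \<in> I" for p q r
  proof -
    have "mono3 p q r \<in> ideal_gen SI" using mI Ieq by simp
    then obtain a b c where abc: "mono3 a b c \<in> SI" "a \<le> p" "b \<le> q" "c \<le> r"
      using mono_in_gen[OF SI] by blast
    then obtain x y where xy: "mono3 a b c = x * y" "x \<in> SJ" "y \<in> SK" unfolding SI_def by blast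
    obtain a1 b1 c1 where x: "x = mono3 a1 b1 c1" using xy SJ(1) by blast
    obtain a2 b2 c2 where y: "y = mono3 a2 b2 c2" using xy SK(1) by blast
    have "a = a1 + a2 \<and> b = b1 + b2 \<and> c = c1 + c2"
      using xy(1) unfolding x y mono3_mult by (rule mono3_inj)
    then show ?thesis using abc xy x y by blast
  qed
  have prodI: "mono3 (a1+a2) (b1+b2) (c1+c2) \<in> I" if "mono3 a1 b1 c1 \<in> SJ" "mono3 a2 b2 c2 \<in> SK"
    for a1 b1 c1 a2 b2 c2
    using that SIsub unfolding SI_def mono3_mult[symmetric] by blast
  define Cxy where "Cxy = colon I (ideal_gen {varX, varY})"
  have Cxy: "Cxy = {f. f * varX \<in> I \<and> f * varY \<in> I}"
    unfolding Cxy_def colon_gen[OF Iid] by simp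
  have Cxy_id: "is_ideal Cxy" unfolding Cxy is_ideal_def
  proof (intro conjI ballI allI)
    show "0 \<in> {f. f * varX \<in> I \<and> f * varY \<in> I}" using ideal_0[OF Iid] by simp
  next
    fix a b assume "a \<in> {f. f * varX \<in> I \<and> f * varY \<in> I}" "b \<in> {f. f * varX \<in> I \<and> f * varY \<in> I}"
    then show "a + b \<in> {f. f * varX \<in> I \<and> f * varY \<in> I}"
      using ideal_add[OF Iid] by (simp add: distrib_right)
  next
    fix a r assume "a \<in> {f. f * varX \<in> I \<and> f * varY \<in> I}"
    then show "r * a \<in> {f. f * varX \<in> I \<and> f * varY \<in> I}"
      using ideal_mult[OF Iid] by (simp add: mult.assoc)
  qed
  define T where "T = {varZ * a + b | a b. a \<in> Cxy \<and> b \<in> I}"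
  have Tid: "is_ideal T" unfolding is_ideal_def
  proof (intro conjI ballI allI)
    have "(0::'a poly poly poly) = varZ * 0 + 0" by simp
    then show "0 \<in> T" unfolding T_def using ideal_0[OF Iid] ideal_0[OF Cxy_id] by blast
  next
    fix a b assume "a \<in> T" "b \<in> T"
    then obtain a1 b1 a2 b2 where ab: "a = varZ * a1 + b1" "b = varZ * a2 + b2" "a1 \<in> Cxy" "a2 \<in> Cxy"
      "b1 \<in> I" "b2 \<in> I" unfolding T_def by blast
    have "a + b = varZ * (a1 + a2) + (b1 + b2)" using ab by (simp add: algebra_simps)
    moreover have "a1 + a2 \<in> Cxy" using ab ideal_add[OF Cxy_id] by blast
    moreover have "b1 + b2 \<in> I" using ab ideal_add[OF Iid] by blast
    ultimately show "a + b \<in> T" unfolding T_def by blast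
  next
    fix a r assume "a \<in> T"
    then obtain a1 b1 where ab: "a = varZ * a1 + b1" "a1 \<in> Cxy" "b1 \<in> I" unfolding T_def by blast
    have "r * a = varZ * (r * a1) + r * b1" using ab by (simp add: algebra_simps)
    moreover have "r * a1 \<in> Cxy" using ab ideal_mult[OF Cxy_id] by blast
    moreover have "r * b1 \<in> I" using ab ideal_mult[OF Iid] by blast
    ultimately show "r * a \<in> T" unfolding T_def by blast
  qed
  have core: "mono3 (i+i') (j+j') (k+k') \<in> T"
    if h1: "mono3 (i+1) j k \<in> I" and h2: "mono3 i' (j'+1) k' \<in> I" for i j k i' j' k'
  proof -
    obtain a1 a2 a3 b1 b2 b3 where AB: "mono3 a1 a2 a3 \<in> SJ" "mono3 b1 b2 b3 \<in> SK"
      "a1 + b1 \<le> i+1" "a2+b2 \<le> j" "a3+b3 \<le> k" using memI[OF h1] by blast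
    obtain c1 c2 c3 d1 d2 d3 where CD: "mono3 c1 c2 c3 \<in> SJ" "mono3 d1 d2 d3 \<in> SK"
      "c1 + d1 \<le> i'" "c2+d2 \<le> j'+1" "c3+d3 \<le> k'" using memI[OF h2] by blast
    have "mono3 (i+i') (j+j') (k+k') \<in> I \<or>
      (\<exists>w. k+k' = Suc w \<and> mono3 (i+i'+1) (j+j') w \<in> I \<and> mono3 (i+i') (j+j'+1) w \<in> I)"
    proof (rule vec[where M="\<lambda>p q r. mono3 p q r \<in> I"])
      show "\<And>p1 p2 p3 q1 q2 q3. mono3 p1 p2 p3 \<in> I \<Longrightarrow> p1 \<le> q1 \<Longrightarrow> p2 \<le> q2 \<Longrightarrow> p3 \<le> q3 \<Longrightarrow> mono3 q1 q2 q3 \<in> I"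
        by (rule up)
      show "mono3 (a1+b1) (a2+b2) (a3+b3) \<in> I" by (rule prodI[OF AB(1,2)])
      show "mono3 (a1+d1) (a2+d2) (a3+d3) \<in> I" by (rule prodI[OF AB(1) CD(2)])
      show "mono3 (c1+b1) (c2+b2) (c3+b3) \<in> I" by (rule prodI[OF CD(1) AB(2)])
      show "mono3 (c1+d1) (c2+d2) (c3+d3) \<in> I" by (rule prodI[OF CD(1,2)])
      show "a1+a2+a3>0" by (rule proper_gen[OF SJ(2) assms(3) AB(1)])
      show "b1+b2+b3>0" by (rule proper_gen[OF SK(2) assms(4) AB(2)])
      show "c1+c2+c3>0" by (rule proper_gen[OF SJ(2) assms(3) CD(1)])
      show "d1+d2+d3>0" by (rule proper_gen[OF SK(2) assms(4) CD(2)])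
    qed (use AB CD in auto)
    then show ?thesis
    proof
      assume mi: "mono3 (i+i') (j+j') (k+k') \<in> I"
      have "mono3 (i+i') (j+j') (k+k') = varZ * 0 + mono3 (i+i') (j+j') (k+k')" by simp
      then show ?thesis unfolding T_def using mi ideal_0[OF Cxy_id] by blast
    next
      assume "\<exists>w. k+k' = Suc w \<and> mono3 (i+i'+1) (j+j') w \<in> I \<and> mono3 (i+i') (j+j'+1) w \<in> I"
      then obtain w where w: "k+k' = Suc w" "mono3 (i+i'+1) (j+j') w \<in> I" "mono3 (i+i') (j+j'+1) w \<in> I"
        by blast
      have "mono3 (i+i') (j+j') w \<in> Cxy" unfolding Cxy varX_mono varY_mono using w by (simp add: mono3_mult)
      moreover have "mono3 (i+i') (j+j') (k+k') = varZ * mono3 (i+i') (j+j') w + 0"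
        unfolding varZ_mono using w by (simp add: mono3_mult mult.commute)
      ultimately show ?thesis unfolding T_def using ideal_0[OF Iid] by blast
    qed
  qed
  have supX: "mono3 (i+1) j k \<in> I" if fI: "f * varX \<in> I" and nz: "coeff3 f i j k \<noteq> 0" for f i j k
  proof -
    have "term3 1 1 0 0 * f \<in> Gen SI" using fI Ieq gen_eq[OF SI]
      by (simp add: varX_mono mono3_term3 mult.commute)
    moreover have "coeff3 (term3 1 1 0 0 * f) (i+1) j k \<noteq> 0" using nz by (simp add: coeff3_term_mult)
    ultimately have "\<exists>a b c. mono3 a b c \<in> SI \<and> a \<le> i+1 \<and> b \<le> j \<and> c \<le> k"
      unfolding Gen_def by simp
    then have "mono3 (i+1) (j) k \<in> ideal_gen SI" using mono_in_gen[OF SI, of "i+1" "j" k] by simp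
    then show ?thesis using Ieq by simp
  qed
  have supY: "mono3 i (j+1) k \<in> I" if fI: "f * varY \<in> I" and nz: "coeff3 f i j k \<noteq> 0" for f i j k
  proof -
    have "term3 1 0 1 0 * f \<in> Gen SI" using fI Ieq gen_eq[OF SI]
      by (simp add: varY_mono mono3_term3 mult.commute)
    moreover have "coeff3 (term3 1 0 1 0 * f) i (j+1) k \<noteq> 0" using nz by (simp add: coeff3_term_mult)
    ultimately have "\<exists>a b c. mono3 a b c \<in> SI \<and> a \<le> i \<and> b \<le> j+1 \<and> c \<le> k"
      unfolding Gen_def by simp
    then have "mono3 (i) (j+1) k \<in> ideal_gen SI" using mono_in_gen[OF SI, of "i" "j+1" k] by simp
    then show ?thesis using Ieq by simp
  qed
  have T0: "0 \<in> T" and Tadd: "\<forall>a\<in>T. \<forall>b\<in>T. a + b \<in> T" using Tid unfolding is_ideal_def by auto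
  have split: "term3 c i j k * g = term3 c 0 0 0 * (mono3 i j k * g)" for c i j k and g :: "'a poly poly poly"
    by (simp add: mono3_term3 term3_mult mult.assoc[symmetric])
  have prodT: "a * b \<in> T" if a: "a * varX \<in> I" and b: "b * varY \<in> I" for a b
  proof (rule terms_mult[OF T0 Tadd])
    fix i j k assume nza: "coeff3 a i j k \<noteq> 0"
    have "b * mono3 i j k \<in> T"
    proof (rule terms_mult[OF T0 Tadd])
      fix i' j' k' assume nzb: "coeff3 b i' j' k' \<noteq> 0"
      have "mono3 (i+i') (j+j') (k+k') \<in> T" by (rule core[OF supX[OF a nza] supY[OF b nzb]])
      then have "mono3 i' j' k' * mono3 i j k \<in> T" by (simp add: mono3_mult add.commute)
      then show "term3 (coeff3 b i' j' k') i' j' k' * mono3 i j k \<in> T"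
        by (subst split) (rule ideal_mult[OF Tid])
    qed
    then show "term3 (coeff3 a i j k) i j k * b \<in> T"
      by (subst split) (rule ideal_mult[OF Tid], simp add: mult.commute)
  qed
  have PX: "colon I (ideal_gen {varX}) = {f. f * varX \<in> I}" by (simp add: colon_gen[OF Iid])
  have PY: "colon I (ideal_gen {varY}) = {f. f * varY \<in> I}" by (simp add: colon_gen[OF Iid])
  have "ideal_prod (colon I (ideal_gen {varX})) (colon I (ideal_gen {varY})) \<subseteq> T"
    unfolding ideal_prod_def PX PY
  proof (rule ideal_gen_least[OF Tid])
    show "{a * b |a b. a \<in> {f. f * varX \<in> I} \<and> b \<in> {f. f * varY \<in> I}} \<subseteq> T"
    proof
      fix x assume "x \<in> {a * b |a b. a \<in> {f. f * varX \<in> I} \<and> b \<in> {f. f * varY \<in> I}}"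
      then obtain a b where "x = a * b" "a * varX \<in> I" "b * varY \<in> I" by blast
      then show "x \<in> T" using prodT by simp
    qed
  qed
  then show ?thesis unfolding T_def Cxy_def .
qed


end
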